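(* Let $G=(V,E)$ be a finite, connected, non-bipartite $d$-regular graph. Then $$\beta_{out}(G)\;\geq\;\beta(G)\;\geq\;\tfrac{1}{d}\,\beta_{out}(G).$$
   Context: For $A,B\subseteq V$, $e(A,B)$ denotes the number of ordered pairs $(a,b)\in A\times B$ with $a\sim b$ (so $e(A,A)$ is twice the number of edges inside $A$). For $S\subseteq V$, $\partial(S)$ is the set of edges with exactly one endpoint in $S$, $\partial_{out}(S)$ is the set of vertices not in $S$ having a neighbor in $S$, and $I(S)$ is the number of vertices of $S$ having a neighbor in $S$. For disjoint $L,R\subseteq V$ with $L\cup R\neq\emptyset$, define $$b(L,R)=\frac{e(L,L)+e(R,R)+|\partial(L\cup R)|}{d\,|L\cup R|},\qquad b_{out}(L,R)=\frac{I(L)+I(R)+|\partial_{out}(L\cup R)|}{|L\cup R|}.$$ The bipartiteness constant is $\beta(G)=\min_{L,R} b(L,R)$ and the outer vertex bipartiteness constant is $\beta_{out}(G)=\min_{L,R} b_{out}(L,R)$, both minima over disjoint $L,R$ with $L\cup R\ne\emptyset$. *)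

theory Defs
  imports Main "HOL-Library.Transitive_Closure_Table" Complex_Main
begin

definition simple_graph :: "'a set \<Rightarrow> ('a \<Rightarrow> 'a \<Rightarrow> bool) \<Rightarrow> bool" where
  "simple_graph V E \<longleftrightarrow> finite V \<and> (\<forall>u v. E u v \<longrightarrow> E v u) \<and> (\<forall>u. \<not> E u u)
     \<and> (\<forall>u v. E u v \<longrightarrow> u \<in> V \<and> v \<in> V)"

definition neighbours :: "'a set \<Rightarrow> ('a \<Rightarrow> 'a \<Rightarrow> bool) \<Rightarrow> 'a \<Rightarrow> 'a set" where
  "neighbours V E v = {u \<in> V. E v u}"

definition regular :: "'a set \<Rightarrow> ('a \<Rightarrow> 'a \<Rightarrow> bool) \<Rightarrow> nat \<Rightarrow> bool" where
  "regular V E d \<longleftrightarrow> (\<forall>v\<in>V. card (neighbours V E v) = d)"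

definition connected_graph :: "'a set \<Rightarrow> ('a \<Rightarrow> 'a \<Rightarrow> bool) \<Rightarrow> bool" where
  "connected_graph V E \<longleftrightarrow> V \<noteq> {} \<and> (\<forall>u\<in>V. \<forall>v\<in>V. E\<^sup>*\<^sup>* u v)"

definition bipartite :: "'a set \<Rightarrow> ('a \<Rightarrow> 'a \<Rightarrow> bool) \<Rightarrow> bool" where
  "bipartite V E \<longleftrightarrow> (\<exists>A B. A \<inter> B = {} \<and> A \<union> B = V \<and>
       (\<forall>u v. E u v \<longrightarrow> \<not> (u \<in> A \<and> v \<in> A) \<and> \<not> (u \<in> B \<and> v \<in> B)))"

definition e_pairs :: "('a \<Rightarrow> 'a \<Rightarrow> bool) \<Rightarrow> 'a set \<Rightarrow> 'a set \<Rightarrow> nat" where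
  "e_pairs E A B = card {(a, b). a \<in> A \<and> b \<in> B \<and> E a b}"

text \<open>|boundary(S)|: number of edges with exactly one endpoint in S (each edge counted
once, via its orientation from inside S to outside S).\<close>
definition edge_boundary_card :: "'a set \<Rightarrow> ('a \<Rightarrow> 'a \<Rightarrow> bool) \<Rightarrow> 'a set \<Rightarrow> nat" where
  "edge_boundary_card V E S = card {(a, b). a \<in> S \<and> b \<in> V - S \<and> E a b}"

definition outer_boundary :: "'a set \<Rightarrow> ('a \<Rightarrow> 'a \<Rightarrow> bool) \<Rightarrow> 'a set \<Rightarrow> 'a set" where
  "outer_boundary V E S = {v \<in> V - S. \<exists>u\<in>S. E v u}"

definition inner_count :: "('a \<Rightarrow> 'a \<Rightarrow> bool) \<Rightarrow> 'a set \<Rightarrow> nat" where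
  "inner_count E S = card {v \<in> S. \<exists>u\<in>S. E v u}"

definition b_val :: "'a set \<Rightarrow> ('a \<Rightarrow> 'a \<Rightarrow> bool) \<Rightarrow> nat \<Rightarrow> 'a set \<Rightarrow> 'a set \<Rightarrow> real" where
  "b_val V E d L R =
     real (e_pairs E L L + e_pairs E R R + edge_boundary_card V E (L \<union> R))
       / (real d * real (card (L \<union> R)))"

definition b_out :: "'a set \<Rightarrow> ('a \<Rightarrow> 'a \<Rightarrow> bool) \<Rightarrow> 'a set \<Rightarrow> 'a set \<Rightarrow> real" where
  "b_out V E L R =
     real (inner_count E L + inner_count E R + card (outer_boundary V E (L \<union> R)))
       / real (card (L \<union> R))"

definition admissible_pairs :: "'a set \<Rightarrow> ('a set \<times> 'a set) set" where
  "admissible_pairs V = {(L, R). L \<subseteq> V \<and> R \<subseteq> V \<and> L \<inter> R = {} \<and> L \<union> R \<noteq> {}}"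

definition bipartiteness_const :: "'a set \<Rightarrow> ('a \<Rightarrow> 'a \<Rightarrow> bool) \<Rightarrow> nat \<Rightarrow> real" where
  "bipartiteness_const V E d = Min ((\<lambda>(L, R). b_val V E d L R) ` admissible_pairs V)"

definition outer_bipartiteness_const :: "'a set \<Rightarrow> ('a \<Rightarrow> 'a \<Rightarrow> bool) \<Rightarrow> real" where
  "outer_bipartiteness_const V E = Min ((\<lambda>(L, R). b_out V E L R) ` admissible_pairs V)"

end

theory Submission
  imports Defs
begin

lemma key:
  assumes sg: "simple_graph V E" and reg: "regular V E d"
    and P: "P \<subseteq> {(a, b). E a b}"
  shows "card (fst ` P) \<le> card P \<and> card P \<le> d * card (fst ` P)"
proof -
  have fin: "finite V" using sg by (simp add: simple_graph_def)
  have PV: "P \<subseteq> V \<times> V" using P sg by (auto simp: simple_graph_def)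
  have finP: "finite P" using PV fin by (meson finite_SigmaI rev_finite_subset)
  have A: "fst ` P \<subseteq> V" using PV by auto
  have finA: "finite (fst ` P)" using finP by simp
  have sub: "P \<subseteq> Sigma (fst ` P) (neighbours V E)"
    using P PV by (force simp: neighbours_def)
  have finN: "\<And>a. finite (neighbours V E a)" using fin by (simp add: neighbours_def)
  have "card P \<le> card (Sigma (fst ` P) (neighbours V E))"
    using sub finA finN by (intro card_mono) auto
  also have "\<dots> = (\<Sum>a\<in>fst ` P. card (neighbours V E a))"
    using finA finN by (simp add: card_SigmaI)
  also have "\<dots> = (\<Sum>a\<in>fst ` P. d)"
    using A reg by (intro sum.cong) (auto simp: regular_def)
  also have "\<dots> = d * card (fst ` P)" by simp
  finally show ?thesis using card_image_le finP by auto
qed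

lemma inner_bounds:
  assumes sg: "simple_graph V E" and reg: "regular V E d"
  shows "inner_count E L \<le> e_pairs E L L \<and> e_pairs E L L \<le> d * inner_count E L"
proof -
  let ?P = "{(a, b). a \<in> L \<and> b \<in> L \<and> E a b}"
  have eq: "fst ` ?P = {v \<in> L. \<exists>u\<in>L. E v u}" by force
  have "?P \<subseteq> {(a, b). E a b}" by auto
  from key[OF sg reg this] show ?thesis using eq
    by (simp add: inner_count_def e_pairs_def)
qed

lemma boundary_bounds:
  assumes sg: "simple_graph V E" and reg: "regular V E d"
  shows "card (outer_boundary V E S) \<le> edge_boundary_card V E S
       \<and> edge_boundary_card V E S \<le> d * card (outer_boundary V E S)"
proof -
  let ?B = "{(a, b). a \<in> S \<and> b \<in> V - S \<and> E a b}"
  have sym: "\<And>u v. E u v \<Longrightarrow> E v u" using sg by (simp add: simple_graph_def)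
  have c: "card (prod.swap ` ?B) = card ?B" by (simp add: card_image)
  have eq: "fst ` (prod.swap ` ?B) = outer_boundary V E S"
    unfolding outer_boundary_def using sym by force
  have "prod.swap ` ?B \<subseteq> {(a, b). E a b}" using sym by auto
  from key[OF sg reg this] show ?thesis using c eq
    by (simp add: edge_boundary_card_def)
qed

lemma pair_ineq:
  assumes sg: "simple_graph V E" and reg: "regular V E d"
    and adm: "(L, R) \<in> admissible_pairs V"
  shows "b_val V E d L R \<le> b_out V E L R \<and> b_out V E L R / real d \<le> b_val V E d L R"
proof -
  define N1 where "N1 = e_pairs E L L + e_pairs E R R + edge_boundary_card V E (L \<union> R)"
  define N2 where "N2 = inner_count E L + inner_count E R + card (outer_boundary V E (L \<union> R))"
  define n where "n = card (L \<union> R)"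
  have h1: "N2 \<le> N1" "N1 \<le> d * N2"
    using inner_bounds[OF sg reg, of L] inner_bounds[OF sg reg, of R]
      boundary_bounds[OF sg reg, of "L \<union> R"]
    unfolding N1_def N2_def by (auto simp: algebra_simps)
  have fin: "finite V" using sg by (simp add: simple_graph_def)
  have "n > 0" using adm fin unfolding n_def admissible_pairs_def
    by (auto intro!: card_gt_0_iff[THEN iffD2] intro: finite_subset)
  have r1: "real N2 \<le> real N1" "real N1 \<le> real d * real N2"
    using h1 by (simp_all add: of_nat_mult[symmetric] del: of_nat_mult)
  have bv: "b_val V E d L R = real N1 / (real d * real n)"
    by (simp add: b_val_def N1_def n_def)
  have bo: "b_out V E L R = real N2 / real n"
    by (simp add: b_out_def N2_def n_def)
  show ?thesis
  proof (cases "d = 0")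
    case True
    then show ?thesis using bv bo by simp
  next
    case False
    then have dp: "real d > 0" by simp
    have np: "real n > 0" using \<open>n > 0\<close> by simp
    have a: "real N1 / (real d * real n) \<le> real N2 / real n"
      using dp np r1 by (simp add: field_simps)
    have b: "real N2 / real n / real d \<le> real N1 / (real d * real n)"
      using dp np r1 by (simp add: field_simps)
    show ?thesis using a b bv bo by simp
  qed
qed

theorem theorem2:
  fixes V :: "'a set" and E :: "'a \<Rightarrow> 'a \<Rightarrow> bool" and d :: nat
  assumes "simple_graph V E"
    and "regular V E d"
    and "connected_graph V E"
    and "\<not> bipartite V E"
  shows "outer_bipartiteness_const V E \<ge> bipartiteness_const V E d
       \<and> bipartiteness_const V E d \<ge> outer_bipartiteness_const V E / real d"
proof -
  let ?A = "admissible_pairs V"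
  let ?f = "\<lambda>(L, R). b_val V E d L R"
  let ?g = "\<lambda>(L, R). b_out V E L R"
  have fin: "finite V" using assms(1) by (simp add: simple_graph_def)
  obtain v where v: "v \<in> V" using assms(3) by (auto simp: connected_graph_def)
  have "({v}, {}) \<in> ?A" using v by (simp add: admissible_pairs_def)
  then have ne: "?A \<noteq> {}" by blast
  have "?A \<subseteq> Pow V \<times> Pow V" by (auto simp: admissible_pairs_def)
  then have finA: "finite ?A" using fin by (meson finite_Pow_iff finite_SigmaI rev_finite_subset)
  have pw: "\<And>x. x \<in> ?A \<Longrightarrow> ?f x \<le> ?g x \<and> ?g x / real d \<le> ?f x"
    using pair_ineq[OF assms(1,2)] by auto
  have "Min (?g ` ?A) \<in> ?g ` ?A" using finA ne by simp
  then obtain x where x: "x \<in> ?A" "Min (?g ` ?A) = ?g x" by auto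
  have "Min (?f ` ?A) \<le> ?f x" using finA x by simp
  also have "\<dots> \<le> ?g x" using pw x by blast
  finally have 1: "Min (?f ` ?A) \<le> Min (?g ` ?A)" using x by simp
  have "Min (?f ` ?A) \<in> ?f ` ?A" using finA ne by simp
  then obtain y where y: "y \<in> ?A" "Min (?f ` ?A) = ?f y" by auto
  have "Min (?g ` ?A) \<le> ?g y" using finA y by simp
  then have "Min (?g ` ?A) / real d \<le> ?g y / real d" by (simp add: divide_right_mono)
  also have "\<dots> \<le> ?f y" using pw y by blast
  finally have 2: "Min (?g ` ?A) / real d \<le> Min (?f ` ?A)" using y by simp
  show ?thesis using 1 2
    by (simp add: bipartiteness_const_def outer_bipartiteness_const_def)
qed

end
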